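(* The Gromov--Hausdorff distance $d_{\mathrm{GH}}$ and the modified Gromov--Hausdorff distance $\widehat{d}_{\mathrm{GH}}$ are not Lipschitz-equivalent, even when restricted to finite ultrametric spaces: for every $C>0$ there exist finite ultrametric spaces $X,Y$ with $d_{\mathrm{GH}}(X,Y)> C\,\widehat{d}_{\mathrm{GH}}(X,Y)$.
   Context: A metric space $X$ is ultrametric if $d_X(x,x'')\le\max\{d_X(x,x'),d_X(x',x'')\}$ for all $x,x',x''\in X$. For a map $f:X\to Y$ between metric spaces, $\operatorname{dis}(f)=\sup_{x,x'\in X}|d_X(x,x')-d_Y(f(x),f(x'))|$. For $f:X\to Y$, $g:Y\to X$, $\operatorname{codis}(f,g)=\sup_{x\in X,y\in Y}|d_X(x,g(y))-d_Y(f(x),y)|$. For compact metric spaces, $d_{\mathrm{GH}}(X,Y)$ is the Gromov--Hausdorff distance (infimum over metric spaces $Z$ and isometric embeddings of $X,Y$ into $Z$ of the Hausdorff distance of the images); equivalently $d_{\mathrm{GH}}(X,Y)=\frac12\inf_{f,g}\max\{\operatorname{dis}(f),\operatorname{dis}(g),\operatorname{codis}(f,g)\}$. The modified Gromov--Hausdorff distance is $\widehat{d}_{\mathrm{GH}}(X,Y)=\frac12\max\{\inf_{f:X\to Y}\operatorname{dis}(f),\inf_{g:Y\to X}\operatorname{dis}(g)\}$. *)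

theory Defs
  imports "HOL-Library.FuncSet" Complex_Main
begin

definition finite_metric_space :: "'a set \<Rightarrow> ('a \<Rightarrow> 'a \<Rightarrow> real) \<Rightarrow> bool" where
  "finite_metric_space X d \<longleftrightarrow> finite X \<and> X \<noteq> {} \<and>
     (\<forall>x\<in>X. \<forall>y\<in>X. d x y = 0 \<longleftrightarrow> x = y) \<and>
     (\<forall>x\<in>X. \<forall>y\<in>X. d x y = d y x) \<and>
     (\<forall>x\<in>X. \<forall>y\<in>X. \<forall>z\<in>X. d x z \<le> d x y + d y z)"

definition ultrametric :: "'a set \<Rightarrow> ('a \<Rightarrow> 'a \<Rightarrow> real) \<Rightarrow> bool" where
  "ultrametric X d \<longleftrightarrow> (\<forall>x\<in>X. \<forall>x'\<in>X. \<forall>x''\<in>X. d x x'' \<le> max (d x x') (d x' x''))"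

definition finite_ultrametric_space :: "'a set \<Rightarrow> ('a \<Rightarrow> 'a \<Rightarrow> real) \<Rightarrow> bool" where
  "finite_ultrametric_space X d \<longleftrightarrow> finite_metric_space X d \<and> ultrametric X d"

definition dis :: "'a set \<Rightarrow> ('a \<Rightarrow> 'a \<Rightarrow> real) \<Rightarrow> ('b \<Rightarrow> 'b \<Rightarrow> real) \<Rightarrow> ('a \<Rightarrow> 'b) \<Rightarrow> real" where
  "dis X dX dY f = (SUP p\<in>X \<times> X. \<bar>dX (fst p) (snd p) - dY (f (fst p)) (f (snd p))\<bar>)"

definition codis :: "'a set \<Rightarrow> ('a \<Rightarrow> 'a \<Rightarrow> real) \<Rightarrow> 'b set \<Rightarrow> ('b \<Rightarrow> 'b \<Rightarrow> real)
    \<Rightarrow> ('a \<Rightarrow> 'b) \<Rightarrow> ('b \<Rightarrow> 'a) \<Rightarrow> real" where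
  "codis X dX Y dY f g = (SUP p\<in>X \<times> Y. \<bar>dX (fst p) (g (snd p)) - dY (f (fst p)) (snd p)\<bar>)"

definition dGH :: "'a set \<Rightarrow> ('a \<Rightarrow> 'a \<Rightarrow> real) \<Rightarrow> 'b set \<Rightarrow> ('b \<Rightarrow> 'b \<Rightarrow> real) \<Rightarrow> real" where
  "dGH X dX Y dY = 1/2 * Inf {max (max (dis X dX dY f) (dis Y dY dX g)) (codis X dX Y dY f g)
       | f g. f \<in> X \<rightarrow> Y \<and> g \<in> Y \<rightarrow> X}"

definition mdGH :: "'a set \<Rightarrow> ('a \<Rightarrow> 'a \<Rightarrow> real) \<Rightarrow> 'b set \<Rightarrow> ('b \<Rightarrow> 'b \<Rightarrow> real) \<Rightarrow> real" where
  "mdGH X dX Y dY = 1/2 * max (Inf {dis X dX dY f | f. f \<in> X \<rightarrow> Y})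
                              (Inf {dis Y dY dX g | g. g \<in> Y \<rightarrow> X})"

end

theory Submission
  imports Defs
begin

definition dXm :: "nat \<Rightarrow> nat \<Rightarrow> nat \<Rightarrow> real" where
  "dXm m a b = (if a = b then 0 else if a div 3 = b div 3 then 2 * real (a div 3) else 4 * real m)"

definition dYm :: "nat \<Rightarrow> nat \<Rightarrow> nat \<Rightarrow> real" where
  "dYm m a b = (if a = b then 0 else if a div 3 = b div 3 then
      (if a div 3 = 0 then 2 * real m else 2 * real (a div 3) - 1) else 4 * real m)"

definition Xm :: "nat \<Rightarrow> nat set" where "Xm m = insert 0 {3..3*m+2}"
definition Ym :: "nat \<Rightarrow> nat set" where "Ym m = {0,1} \<union> {3..3*m+2}"
definition gm :: "nat \<Rightarrow> nat \<Rightarrow> nat" where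
  "gm m n = (if n < 3 then 3*m+n else if n < 6 then 0 else n - 3)"

lemma dis_ge:
  assumes "finite X" "a \<in> X" "b \<in> X"
  shows "\<bar>dX a b - dY (f a) (f b)\<bar> \<le> dis X dX dY f"
  unfolding dis_def
proof -
  have "bdd_above ((\<lambda>p. \<bar>dX (fst p) (snd p) - dY (f (fst p)) (f (snd p))\<bar>) ` (X \<times> X))"
    using assms(1) by (intro bdd_above_finite) auto
  from cSUP_upper[OF _ this, of "(a,b)"] assms show
    "\<bar>dX a b - dY (f a) (f b)\<bar> \<le> (SUP p\<in>X \<times> X. \<bar>dX (fst p) (snd p) - dY (f (fst p)) (f (snd p))\<bar>)"
    by auto
qed

lemma codis_ge:
  assumes "finite X" "finite Y" "a \<in> X" "b \<in> Y"
  shows "\<bar>dX a (g b) - dY (f a) b\<bar> \<le> codis X dX Y dY f g"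
  unfolding codis_def
proof -
  have "bdd_above ((\<lambda>p. \<bar>dX (fst p) (g (snd p)) - dY (f (fst p)) (snd p)\<bar>) ` (X \<times> Y))"
    using assms(1,2) by (intro bdd_above_finite) auto
  from cSUP_upper[OF _ this, of "(a,b)"] assms show
    "\<bar>dX a (g b) - dY (f a) b\<bar> \<le> (SUP p\<in>X \<times> Y. \<bar>dX (fst p) (g (snd p)) - dY (f (fst p)) (snd p)\<bar>)"
    by auto
qed

lemma dis_le:
  assumes "X \<noteq> {}" "\<And>a b. a \<in> X \<Longrightarrow> b \<in> X \<Longrightarrow> \<bar>dX a b - dY (f a) (f b)\<bar> \<le> c"
  shows "dis X dX dY f \<le> c"
  unfolding dis_def using assms by (intro cSUP_least) auto

lemma dis_nonneg:
  assumes "finite X" "X \<noteq> {}"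
  shows "0 \<le> dis X dX dY f"
proof -
  obtain a where "a \<in> X" using assms by auto
  then show ?thesis using dis_ge[OF assms(1) \<open>a \<in> X\<close> \<open>a \<in> X\<close>, of dX dY f]
    by linarith
qed

lemma cluster_fus:
  fixes c :: "'a \<Rightarrow> 'b" and v :: "'b \<Rightarrow> real"
  assumes "finite S" "S \<noteq> {}" "0 < L"
    and "\<And>x y. x \<in> S \<Longrightarrow> y \<in> S \<Longrightarrow> x \<noteq> y \<Longrightarrow> c x = c y \<Longrightarrow> 0 < v (c x)"
    and "\<And>x. x \<in> S \<Longrightarrow> v (c x) \<le> L" "\<And>x. x \<in> S \<Longrightarrow> 0 \<le> v (c x)"
  shows "finite_ultrametric_space S (\<lambda>a b. if a = b then 0 else if c a = c b then v (c a) else L)"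
  (is "finite_ultrametric_space S ?d")
proof -
  have nn: "0 \<le> ?d x y" if "x \<in> S" "y \<in> S" for x y using assms that by auto
  have um: "?d x z \<le> max (?d x y) (?d y z)" if "x \<in> S" "y \<in> S" "z \<in> S" for x y z
  proof (cases "x = z")
    case True then show ?thesis using nn[OF that(1,2)] nn[OF that(2,3)] True by (simp add: le_max_iff_disj)
  next
    case False
    show ?thesis
    proof (cases "c x = c z")
      case True
      then show ?thesis using False assms(5)[OF that(1)] assms(5)[OF that(2)] assms(3)
        by (cases "x = y"; cases "y = z"; cases "c x = c y"; cases "c y = c z"; simp add: le_max_iff_disj)
    next
      case False
      then show ?thesis using \<open>x \<noteq> z\<close>
        by (cases "x = y"; cases "y = z"; cases "c x = c y"; cases "c y = c z"; simp add: le_max_iff_disj)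
    qed
  qed
  have "ultrametric S ?d" unfolding ultrametric_def using um by blast
  moreover have "finite_metric_space S ?d"
    unfolding finite_metric_space_def
  proof (intro conjI ballI)
    fix x y assume "x \<in> S" "y \<in> S"
    then show "(?d x y = 0) = (x = y)" using assms(3) assms(4)[of x y] by (cases "x = y"; cases "c x = c y") auto
  next
    fix x y assume "x \<in> S" "y \<in> S"
    then show "?d x y = ?d y x" by auto
  next
    fix x y z assume xyz: "x \<in> S" "y \<in> S" "z \<in> S"
    show "?d x z \<le> ?d x y + ?d y z"
      using um[OF xyz] nn[OF xyz(1,2)] nn[OF xyz(2,3)] by linarith
  qed (use assms in auto)
  ultimately show ?thesis unfolding finite_ultrametric_space_def by blast
qed

lemma ultra_X: "m \<ge> 1 \<Longrightarrow> finite_ultrametric_space (Xm m) (dXm m)"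
proof -
  assume m: "m \<ge> 1"
  have e: "dXm m = (\<lambda>a b. if a = b then 0 else if a div 3 = b div 3 then (\<lambda>i. 2 * real i) (a div 3) else 4 * real m)"
    by (auto simp: dXm_def fun_eq_iff)
  show ?thesis unfolding e
  proof (rule cluster_fus)
    fix x y assume "x \<in> Xm m" "y \<in> Xm m" "x \<noteq> y" "x div 3 = y div 3"
    then show "0 < 2 * real (x div 3)" by (auto simp: Xm_def)
  next
    fix x assume "x \<in> Xm m"
    then have "x div 3 \<le> m" by (auto simp: Xm_def)
    then show "2 * real (x div 3) \<le> 4 * real m" by simp
  qed (use m in \<open>auto simp: Xm_def\<close>)
qed

lemma ultra_Y: "m \<ge> 1 \<Longrightarrow> finite_ultrametric_space (Ym m) (dYm m)"
proof -
  assume m: "m \<ge> 1"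
  have e: "dYm m = (\<lambda>a b. if a = b then 0 else if a div 3 = b div 3 then
     (\<lambda>i. if i = 0 then 2 * real m else 2 * real i - 1) (a div 3) else 4 * real m)"
    by (auto simp: dYm_def fun_eq_iff)
  show ?thesis unfolding e
  proof (rule cluster_fus)
    fix x y assume "x \<in> Ym m" "y \<in> Ym m" "x \<noteq> y" "x div 3 = y div 3"
    then show "0 < (if x div 3 = 0 then 2 * real m else 2 * real (x div 3) - 1)"
      using m by (auto simp: Ym_def)
  next
    fix x assume "x \<in> Ym m"
    then have "x div 3 \<le> m" by (auto simp: Ym_def)
    then show "(if x div 3 = 0 then 2 * real m else 2 * real (x div 3) - 1) \<le> 4 * real m" by simp
  next
    fix x assume "x \<in> Ym m"
    then show "0 \<le> (if x div 3 = 0 then 2 * real m else 2 * real (x div 3) - 1)"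
      by (auto simp: Ym_def)
  qed (use m in \<open>auto simp: Ym_def\<close>)
qed

lemma Xm_fin: "finite (Xm m)" "Xm m \<noteq> {}" by (auto simp: Xm_def)
lemma Ym_fin: "finite (Ym m)" "Ym m \<noteq> {}" by (auto simp: Ym_def)

lemma id_maps: "id \<in> Xm m \<rightarrow> Ym m" by (auto simp: Xm_def Ym_def)

lemma gm_div: "a \<in> Ym m \<Longrightarrow> gm m a div 3 = (if a div 3 = 0 then m else a div 3 - 1)"
  by (auto simp: Ym_def gm_def)

lemma gm_maps: "m \<ge> 1 \<Longrightarrow> gm m \<in> Ym m \<rightarrow> Xm m" by (auto simp: Ym_def Xm_def gm_def split: if_splits)

lemma dis_id: "dis (Xm m) (dXm m) (dYm m) id \<le> 1"
proof (rule dis_le[OF Xm_fin(2)])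
  fix a b assume ab: "a \<in> Xm m" "b \<in> Xm m"
  show "\<bar>dXm m a b - dYm m (id a) (id b)\<bar> \<le> 1"
  proof (cases "a = b")
    case False
    show ?thesis
    proof (cases "a div 3 = b div 3")
      case True
      have "a div 3 \<noteq> 0"
      proof
        assume "a div 3 = 0"
        then have "a = 0" "b = 0" using ab True by (auto simp: Xm_def)
        then show False using False by simp
      qed
      then show ?thesis using False True by (simp add: dXm_def dYm_def)
    qed (use False in \<open>simp add: dXm_def dYm_def\<close>)
  qed (simp add: dXm_def dYm_def)
qed

lemma dis_gm: "dis (Ym m) (dYm m) (dXm m) (gm m) \<le> 1"
proof (rule dis_le[OF Ym_fin(2)])
  fix a b assume ab: "a \<in> Ym m" "b \<in> Ym m"
  show "\<bar>dYm m a b - dXm m (gm m a) (gm m b)\<bar> \<le> 1"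
  proof (cases "a = b")
    case False
    show ?thesis
    proof (cases "a div 3 = b div 3")
      case True
      consider "a div 3 = 0" | "a div 3 = 1" | "a div 3 \<ge> 2" by linarith
      then show ?thesis
      proof cases
        case 1
        then have "a < 3" "b < 3" using True by auto
        then show ?thesis using False True 1 by (simp add: dXm_def dYm_def gm_def)
      next
        case 2
        then have "a \<ge> 3" "a < 6" "b \<ge> 3" "b < 6" using True by auto
        then show ?thesis using False True 2 by (simp add: dXm_def dYm_def gm_def)
      next
        case 3
        then have h: "a \<ge> 6" "b \<ge> 6" "(a - 3) div 3 = a div 3 - 1" "(b - 3) div 3 = b div 3 - 1"
          "a - 3 \<noteq> b - 3" using True False by auto
        have r: "real (a div 3 - 1) = real (a div 3) - 1" using 3 by (simp add: of_nat_diff)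
        show ?thesis using h False True 3 r by (simp add: dXm_def dYm_def gm_def)
      qed
    next
      case False2: False
      have "a div 3 \<le> m" "b div 3 \<le> m" using ab by (auto simp: Ym_def)
      moreover have inj: "\<And>ca cb. ca \<le> m \<Longrightarrow> cb \<le> m \<Longrightarrow> ca \<noteq> cb \<Longrightarrow>
          (if ca = 0 then m else ca - 1) \<noteq> (if cb = 0 then m else cb - 1)" by auto
      ultimately have "gm m a div 3 \<noteq> gm m b div 3"
        unfolding gm_div[OF ab(1)] gm_div[OF ab(2)] using False2 by blast
      then have "gm m a \<noteq> gm m b" by auto
      then show ?thesis using False False2 \<open>gm m a div 3 \<noteq> gm m b div 3\<close>
        by (simp add: dXm_def dYm_def)
    qed
  qed (simp add: dXm_def dYm_def)
qed

lemma mdGH_le: assumes m1: "m \<ge> 1" shows "mdGH (Xm m) (dXm m) (Ym m) (dYm m) \<le> 1/2"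
proof -
  have b1: "bdd_below {dis (Xm m) (dXm m) (dYm m) f | f. f \<in> Xm m \<rightarrow> Ym m}"
    by (rule bdd_belowI[of _ 0]) (use dis_nonneg[OF Xm_fin] in auto)
  have b2: "bdd_below {dis (Ym m) (dYm m) (dXm m) g | g. g \<in> Ym m \<rightarrow> Xm m}"
    by (rule bdd_belowI[of _ 0]) (use dis_nonneg[OF Ym_fin] in auto)
  have "Inf {dis (Xm m) (dXm m) (dYm m) f | f. f \<in> Xm m \<rightarrow> Ym m} \<le> dis (Xm m) (dXm m) (dYm m) id"
    by (rule cInf_lower[OF _ b1]) (use id_maps in blast)
  also have "\<dots> \<le> 1" by (rule dis_id)
  finally have 1: "Inf {dis (Xm m) (dXm m) (dYm m) f | f. f \<in> Xm m \<rightarrow> Ym m} \<le> 1" .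
  have "Inf {dis (Ym m) (dYm m) (dXm m) g | g. g \<in> Ym m \<rightarrow> Xm m} \<le> dis (Ym m) (dYm m) (dXm m) (gm m)"
    by (rule cInf_lower[OF _ b2]) (use gm_maps[OF m1] in blast)
  also have "\<dots> \<le> 1" by (rule dis_gm)
  finally have 2: "Inf {dis (Ym m) (dYm m) (dXm m) g | g. g \<in> Ym m \<rightarrow> Xm m} \<le> 1" .
  show ?thesis unfolding mdGH_def using 1 2 by simp
qed

lemma lower:
  assumes m1: "m \<ge> 1" and f: "f \<in> Xm m \<rightarrow> Ym m" and g: "g \<in> Ym m \<rightarrow> Xm m"
  shows "real m \<le> max (max (dis (Xm m) (dXm m) (dYm m) f) (dis (Ym m) (dYm m) (dXm m) g))
                     (codis (Xm m) (dXm m) (Ym m) (dYm m) f g)"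
proof (rule ccontr)
  let ?M = "max (max (dis (Xm m) (dXm m) (dYm m) f) (dis (Ym m) (dYm m) (dXm m) g))
                     (codis (Xm m) (dXm m) (Ym m) (dYm m) f g)"
  assume "\<not> real m \<le> ?M"
  then have M: "?M < real m" by linarith
  have D1: "\<bar>dXm m a b - dYm m (f a) (f b)\<bar> < real m" if "a \<in> Xm m" "b \<in> Xm m" for a b
    using dis_ge[OF Xm_fin(1) that, of "dXm m" "dYm m" f] M by linarith
  have D2: "\<bar>dYm m a b - dXm m (g a) (g b)\<bar> < real m" if "a \<in> Ym m" "b \<in> Ym m" for a b
    using dis_ge[OF Ym_fin(1) that, of "dYm m" "dXm m" g] M by linarith
  have D3: "\<bar>dXm m a (g b) - dYm m (f a) b\<bar> < real m" if "a \<in> Xm m" "b \<in> Ym m" for a b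
    using codis_ge[OF Xm_fin(1) Ym_fin(1) that, of "dXm m" g "dYm m" f] M by linarith
  have y0: "0 \<in> Ym m" and y1: "1 \<in> Ym m" by (auto simp: Ym_def)
  define x where "x = g 0"
  have xX: "x \<in> Xm m" using g y0 x_def by auto
  have g1X: "g 1 \<in> Xm m" using g y1 by auto
  have fxY: "f x \<in> Ym m" using f xX by auto
  have "\<bar>dXm m x x - dYm m (f x) 0\<bar> < real m" using D3[OF xX y0] x_def by simp
  then have "dYm m (f x) 0 < real m" by (simp add: dXm_def dYm_def split: if_splits)
  then have fx01: "f x div 3 = 0"
    by (cases "f x = 0") (auto simp: dYm_def split: if_splits)
  have D21: "\<bar>2 * real m - dXm m x (g 1)\<bar> < real m"
    using D2[OF y0 y1] x_def by (simp add: dYm_def)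
  show False
  proof (cases "x = 0")
    case True
    then show ?thesis using D21 g1X
      by (cases "g 1 = 0") (auto simp: dXm_def Xm_def split: if_splits)
  next
    case False
    define j where "j = x div 3"
    have j1: "j \<ge> 1" "j \<le> m" using xX False by (auto simp: Xm_def j_def)
    have kX: "3*j + k \<in> Xm m" if "k < 3" for k using j1 that by (auto simp: Xm_def)
    have fk: "f (3*j + k) div 3 = 0" if "k < 3" for k
    proof (rule ccontr)
      assume ne: "f (3*j + k) div 3 \<noteq> 0"
      have "(3*j+k) div 3 = j" using that by auto
      then have "dXm m x (3*j+k) \<le> 2 * real m" using j1 by (auto simp: dXm_def j_def)
      moreover have "dYm m (f x) (f (3*j+k)) = 4 * real m" using ne fx01 by (auto simp: dYm_def)
      ultimately show False using D1[OF xX kX[OF that]] by linarith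
    qed
    have fk': "f (3*j + k) \<in> {0,1}" if "k < 3" for k
    proof -
      have "f (3*j+k) \<in> Ym m" using f kX[OF that] by auto
      then show ?thesis using fk[OF that] by (auto simp: Ym_def)
    qed
    have "f (3*j+0) = f (3*j+1) \<or> f (3*j+0) = f (3*j+2) \<or> f (3*j+1) = f (3*j+2)"
      using fk'[of 0] fk'[of 1] fk'[of 2] by auto
    then obtain k1 k2 where k: "k1 < 3" "k2 < 3" "k1 \<noteq> k2" "f (3*j+k1) = f (3*j+k2)"
    proof (elim disjE)
      assume "f (3*j+0) = f (3*j+1)" then show thesis using that[of 0 1] by simp
    next
      assume "f (3*j+0) = f (3*j+2)" then show thesis using that[of 0 2] by simp
    next
      assume "f (3*j+1) = f (3*j+2)" then show thesis using that[of 1 2] by simp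
    qed
    have "dXm m (3*j+k1) (3*j+k2) = 2 * real j" using k by (simp add: dXm_def)
    then have "2 * real j < real m" using D1[OF kX[OF k(1)] kX[OF k(2)]] k(4) by (simp add: dYm_def)
    moreover have "dXm m x (g 1) \<in> {0, 2 * real j, 4 * real m}" by (auto simp: dXm_def j_def)
    ultimately show ?thesis using D21 by auto
  qed
qed

theorem theorem2:
  fixes C :: real
  assumes "C > 0"
  shows "\<exists>(X :: nat set) dX (Y :: nat set) dY.
           finite_ultrametric_space X dX \<and> finite_ultrametric_space Y dY \<and>
           dGH X dX Y dY > C * mdGH X dX Y dY"
proof -
  define m where "m = nat \<lceil>C\<rceil> + 1"
  have m1: "m \<ge> 1" by (simp add: m_def)
  have mC: "C < real m" unfolding m_def by linarith
  let ?S = "{max (max (dis (Xm m) (dXm m) (dYm m) f) (dis (Ym m) (dYm m) (dXm m) g))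
       (codis (Xm m) (dXm m) (Ym m) (dYm m) f g) | f g. f \<in> Xm m \<rightarrow> Ym m \<and> g \<in> Ym m \<rightarrow> Xm m}"
  have ne: "?S \<noteq> {}" using id_maps gm_maps[OF m1] by blast
  have "real m \<le> Inf ?S"
    by (rule cInf_greatest[OF ne]) (use lower[OF m1] in blast)
  then have dG: "real m / 2 \<le> dGH (Xm m) (dXm m) (Ym m) (dYm m)" unfolding dGH_def by simp
  have "C * mdGH (Xm m) (dXm m) (Ym m) (dYm m) \<le> C * (1/2)"
    using mdGH_le[OF m1] assms by (intro mult_left_mono) auto
  then have "C * mdGH (Xm m) (dXm m) (Ym m) (dYm m) < dGH (Xm m) (dXm m) (Ym m) (dYm m)"
    using dG mC by linarith
  then show ?thesis using ultra_X[OF m1] ultra_Y[OF m1] by blast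
qed

end
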